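(* Let $d>1$ be an integer and $\mu>0$ an integer. For every relation $R\in\{\le,<,\ge,>,=,\neq\}$ there is a B\"uchi automaton over $\{0,\dots,\mu\}\times\{0,\dots,\mu\}$ accepting a pair $(A,B)$ of sequences in $\{0,\dots,\mu\}^\omega$ (read synchronously) if and only if $\mathrm{DS}(A,d)\,R\,\mathrm{DS}(B,d)$; i.e. the discounted-sum comparator for integer discount factors is $\omega$-regular for all relations.
   Context: $\mathrm{DS}(A,d)=\sum_{i\ge0}A[i]/d^i$. *)

theory Defs
  imports Complex_Main
begin

definition DS :: "(nat \<Rightarrow> nat) \<Rightarrow> nat \<Rightarrow> real" where
  "DS A d = (\<Sum>i. real (A i) / real d ^ i)"

record ('q, 'a) buchi =
  alphabet :: "'a set"
  states :: "'q set"
  initial :: "'q set"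
  trans :: "('q \<times> 'a \<times> 'q) set"
  accepting :: "'q set"

definition wf_buchi :: "('q, 'a) buchi \<Rightarrow> bool" where
  "wf_buchi M \<longleftrightarrow> finite (alphabet M) \<and> finite (states M) \<and>
     initial M \<subseteq> states M \<and> accepting M \<subseteq> states M \<and>
     trans M \<subseteq> states M \<times> alphabet M \<times> states M"

definition buchi_accepts :: "('q, 'a) buchi \<Rightarrow> (nat \<Rightarrow> 'a) \<Rightarrow> bool" where
  "buchi_accepts M w \<longleftrightarrow> (\<exists>r :: nat \<Rightarrow> 'q.
     r 0 \<in> initial M \<and> (\<forall>i. (r i, w i, r (Suc i)) \<in> trans M) \<and>
     (\<exists>\<^sub>\<infinity>i. r i \<in> accepting M))"

end

theory Submission
  imports Defs "HOL-Library.Infinite_Set"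
begin

definition clampK :: "int \<Rightarrow> int \<Rightarrow> int" where
  "clampK K y = max (-K-1) (min (K+1) y)"

definition stepK :: "nat \<Rightarrow> int \<Rightarrow> int \<Rightarrow> nat \<Rightarrow> nat \<Rightarrow> int" where
  "stepK d K x a b = (if x > K \<or> x < -K then x else clampK K (int d * (x + int a - int b)))"

fun stS :: "nat \<Rightarrow> int \<Rightarrow> (nat\<Rightarrow>nat) \<Rightarrow> (nat\<Rightarrow>nat) \<Rightarrow> nat \<Rightarrow> int" where
  "stS d K A B 0 = 0"
| "stS d K A B (Suc n) = stepK d K (stS d K A B n) (A n) (B n)"

fun XS :: "nat \<Rightarrow> (nat\<Rightarrow>nat) \<Rightarrow> (nat\<Rightarrow>nat) \<Rightarrow> nat \<Rightarrow> int" where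
  "XS d A B 0 = 0"
| "XS d A B (Suc n) = int d * (XS d A B n + int (A n) - int (B n))"

definition Mk :: "nat \<Rightarrow> nat \<Rightarrow> (int \<Rightarrow> bool) \<Rightarrow> (nat, nat \<times> nat) buchi" where
  "Mk d \<mu> P = \<lparr>alphabet = {0..\<mu>} \<times> {0..\<mu>}, states = {0..4*\<mu>+2}, initial = {2*\<mu>+1},
     trans = {(q, (a,b), nat (stepK d (2*int \<mu>) (int q - 2*int \<mu> - 1) a b + 2*int \<mu> + 1)) | q a b.
               q \<le> 4*\<mu>+2 \<and> a \<le> \<mu> \<and> b \<le> \<mu>},
     accepting = {q. q \<le> 4*\<mu>+2 \<and> P (int q - 2*int \<mu> - 1)}\<rparr>"

lemma clampK_range: "K \<ge> 0 \<Longrightarrow> -K-1 \<le> clampK K y \<and> clampK K y \<le> K+1"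
  by (simp add: clampK_def)

lemma stepK_range: "K \<ge> 0 \<Longrightarrow> -K-1 \<le> x \<Longrightarrow> x \<le> K+1 \<Longrightarrow>
   -K-1 \<le> stepK d K x a b \<and> stepK d K x a b \<le> K+1"
  using clampK_range[of K] by (simp add: stepK_def)

lemma wf_Mk: "wf_buchi (Mk d \<mu> P)"
proof -
  have "nat (stepK d (2*int \<mu>) (int q - 2*int \<mu> - 1) a b + 2*int \<mu> + 1) \<le> 4*\<mu>+2"
    if "q \<le> 4*\<mu>+2" for q a b
    using stepK_range[of "2*int \<mu>" "int q - 2*int \<mu> - 1" d a b] that by auto
  then show ?thesis unfolding wf_buchi_def Mk_def by auto
qed

lemma aux_neg: "(y::int) \<le> - int m - 1 \<Longrightarrow> 2 * y < -2 * int m" by linarith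

context
  fixes d \<mu> :: nat and A B :: "nat \<Rightarrow> nat"
  assumes d: "d > 1" and bA: "\<forall>i. A i \<le> \<mu> \<and> B i \<le> \<mu>"
begin

lemma X_pos_persist: "XS d A B n > 2*int \<mu> \<Longrightarrow> XS d A B (n+m) > 2*int \<mu>"
proof (induction m)
  case 0 then show ?case by simp
next
  case (Suc m)
  let ?y = "XS d A B (n+m) + int (A (n+m)) - int (B (n+m))"
  have "?y \<ge> int \<mu> + 1" using Suc bA[rule_format, of "n+m"] by auto
  moreover have "int d * ?y \<ge> 2 * ?y"
    using d \<open>?y \<ge> int \<mu> + 1\<close> by (intro mult_right_mono) auto
  ultimately show ?case by simp
qed

lemma X_neg_persist: "XS d A B n < -2*int \<mu> \<Longrightarrow> XS d A B (n+m) < -2*int \<mu>"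
proof (induction m)
  case 0 then show ?case by simp
next
  case (Suc m)
  let ?y = "XS d A B (n+m) + int (A (n+m)) - int (B (n+m))"
  have y: "?y \<le> - int \<mu> - 1" using Suc bA[rule_format, of "n+m"] by auto
  have "int d * ?y \<le> 2 * ?y"
    using d y by (intro mult_right_mono_neg) auto
  moreover have "2 * ?y < -2*int \<mu>" using aux_neg[OF y] .
  ultimately show ?case by simp
qed

lemma st_clamp: "stS d (2*int \<mu>) A B n = clampK (2*int \<mu>) (XS d A B n)"
proof (induction n)
  case 0 then show ?case by (simp add: clampK_def)
next
  case (Suc n)
  show ?case
  proof (cases "XS d A B n > 2*int \<mu>")
    case True
    then have "XS d A B (n+1) > 2*int \<mu>" by (rule X_pos_persist)
    then show ?thesis using True Suc by (simp add: stepK_def clampK_def)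
  next
    case F1: False
    show ?thesis
    proof (cases "XS d A B n < -2*int \<mu>")
      case True
      then have "XS d A B (n+1) < -2*int \<mu>" by (rule X_neg_persist)
      then show ?thesis using True Suc by (simp add: stepK_def clampK_def)
    next
      case False
      then have "stS d (2*int \<mu>) A B n = XS d A B n" using F1 Suc by (simp add: clampK_def)
      then show ?thesis using F1 False by (simp add: stepK_def)
    qed
  qed
qed

definition c :: "nat \<Rightarrow> real" where "c i = real (A i) - real (B i)"
definition R :: "nat \<Rightarrow> real" where "R n = (\<Sum>j. c (n+j) / real d ^ j)"

lemma summ_bound:
  assumes "\<forall>i. \<bar>f i\<bar> \<le> real \<mu>"
  shows "summable (\<lambda>i. f i / real d ^ i) \<and> \<bar>\<Sum>i. f i / real d ^ i\<bar> \<le> 2 * real \<mu>"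
proof -
  let ?g = "\<lambda>i. real \<mu> * (1 / real d) ^ i"
  have dp: "real d > 1" using d by simp
  have sg: "summable ?g" using dp by (intro summable_mult summable_geometric) auto
  have le: "\<bar>f i / real d ^ i\<bar> \<le> ?g i" for i
    using assms dp by (simp add: power_one_over divide_right_mono)
  have sf: "summable (\<lambda>i. f i / real d ^ i)"
    by (rule summable_comparison_test[OF _ sg]) (use le in auto)
  have "(\<Sum>i. f i / real d ^ i) \<le> suminf ?g"
    by (rule suminf_le[OF _ sf sg]) (use le abs_le_D1 in blast)
  moreover have "(\<Sum>i. - (f i / real d ^ i)) \<le> suminf ?g"
    by (rule suminf_le[OF _ summable_minus[OF sf] sg]) (use le abs_le_D2 in blast)
  moreover have "(\<Sum>i. - (f i / real d ^ i)) = - (\<Sum>i. f i / real d ^ i)"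
    using suminf_minus[OF sf] .
  moreover have "suminf ?g = real \<mu> * (1 / (1 - 1 / real d))"
    using dp by (simp add: suminf_mult suminf_geometric)
  moreover have "real \<mu> * (1 / (1 - 1 / real d)) \<le> 2 * real \<mu>"
  proof -
    have "1 / (1 - 1 / real d) = real d / (real d - 1)" using dp by (simp add: field_simps)
    also have "\<dots> \<le> 2" using dp d by (simp add: field_simps)
    finally have "real \<mu> * (1 / (1 - 1 / real d)) \<le> real \<mu> * 2" by (rule mult_left_mono) simp
    then show ?thesis by simp
  qed
  ultimately show ?thesis using sf by auto
qed

lemma c_bound: "\<bar>c i\<bar> \<le> real \<mu>"
  using bA[rule_format, of i] by (auto simp: c_def)

lemma R_summ: "summable (\<lambda>j. c (n+j) / real d ^ j)" and R_bound: "\<bar>R n\<bar> \<le> 2 * real \<mu>"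
  using summ_bound[of "\<lambda>j. c (n+j)"] c_bound by (auto simp: R_def)

lemma D_eq: "DS A d - DS B d = R 0"
proof -
  have sA: "summable (\<lambda>i. real (A i) / real d ^ i)"
    using summ_bound[of "\<lambda>i. real (A i)"] bA by auto
  have sB: "summable (\<lambda>i. real (B i) / real d ^ i)"
    using summ_bound[of "\<lambda>i. real (B i)"] bA by auto
  show ?thesis unfolding DS_def R_def c_def
    using suminf_diff[OF sA sB] by (simp add: diff_divide_distrib)
qed

lemma R_step: "R n = c n + R (Suc n) / real d"
proof -
  have "(\<Sum>j. c (n + Suc j) / real d ^ Suc j) = R n - c n"
    using suminf_split_head[OF R_summ[of n]] by (simp add: R_def)
  moreover have "(\<Sum>j. c (n + Suc j) / real d ^ Suc j) = R (Suc n) / real d"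
  proof -
    have "(\<Sum>j. c (n + Suc j) / real d ^ Suc j) = (\<Sum>j. (c (Suc n + j) / real d ^ j) / real d)"
      by (simp add: mult.commute)
    also have "\<dots> = R (Suc n) / real d"
      unfolding R_def by (rule suminf_divide[OF R_summ[of "Suc n"]])
    finally show ?thesis .
  qed
  ultimately show ?thesis by simp
qed

lemma ident: "real d ^ n * (DS A d - DS B d) = real_of_int (XS d A B n) + R n"
proof (induction n)
  case 0 then show ?case using D_eq by simp
next
  case (Suc n)
  have dp: "real d > 0" using d by simp
  have "real d ^ Suc n * (DS A d - DS B d) = real d * (real_of_int (XS d A B n) + R n)"
    using Suc by simp
  also have "\<dots> = real d * (real_of_int (XS d A B n) + c n) + R (Suc n)"
    using dp by (subst R_step) (simp add: field_simps)
  also have "\<dots> = real_of_int (XS d A B (Suc n)) + R (Suc n)"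
    by (simp add: c_def)
  finally show ?case .
qed

lemma tri:
  "(DS A d > DS B d \<longrightarrow> (\<exists>N. \<forall>m\<ge>N. stS d (2*int \<mu>) A B m = 2*int \<mu> + 1)) \<and>
   (DS A d < DS B d \<longrightarrow> (\<exists>N. \<forall>m\<ge>N. stS d (2*int \<mu>) A B m = -2*int \<mu> - 1)) \<and>
   (DS A d = DS B d \<longrightarrow> (\<forall>m. \<bar>stS d (2*int \<mu>) A B m\<bar> \<le> 2*int \<mu>))"
proof (intro conjI impI)
  define D where "D = DS A d - DS B d"
  have dp: "real d > 1" using d by simp
  {
    assume "DS A d > DS B d"
    then have Dp: "D > 0" by (simp add: D_def)
    obtain n where n: "4 * real \<mu> / D < real d ^ n" using real_arch_pow[OF dp] by blast
    have "4 * real \<mu> < real d ^ n * D" using n Dp by (simp add: pos_divide_less_eq)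
    then have "real_of_int (XS d A B n) > 2 * real \<mu>"
      using ident[of n] R_bound[of n] by (simp add: D_def)
    then have X: "XS d A B n > 2*int \<mu>" by linarith
    show "\<exists>N. \<forall>m\<ge>N. stS d (2*int \<mu>) A B m = 2*int \<mu> + 1"
    proof (intro exI allI impI)
      fix m assume "n \<le> m"
      then obtain k where "m = n + k" using le_Suc_ex by blast
      then have "XS d A B m > 2*int \<mu>" using X_pos_persist[OF X] by simp
      then show "stS d (2*int \<mu>) A B m = 2*int \<mu> + 1" by (simp add: st_clamp clampK_def)
    qed
  }
  {
    assume "DS A d < DS B d"
    then have Dp: "-D > 0" by (simp add: D_def)
    obtain n where n: "4 * real \<mu> / (-D) < real d ^ n" using real_arch_pow[OF dp] by blast
    have "4 * real \<mu> < real d ^ n * (-D)" using n by (simp only: pos_divide_less_eq[OF Dp])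
    moreover have "real d ^ n * (-D) = - (real d ^ n * D)" by simp
    ultimately have "real_of_int (XS d A B n) < - 2 * real \<mu>"
      using ident[of n] R_bound[of n] unfolding D_def by linarith
    then have X: "XS d A B n < -2*int \<mu>" by linarith
    show "\<exists>N. \<forall>m\<ge>N. stS d (2*int \<mu>) A B m = -2*int \<mu> - 1"
    proof (intro exI allI impI)
      fix m assume "n \<le> m"
      then obtain k where "m = n + k" using le_Suc_ex by blast
      then have "XS d A B m < -2*int \<mu>" using X_neg_persist[OF X] by simp
      then show "stS d (2*int \<mu>) A B m = -2*int \<mu> - 1" by (simp add: st_clamp clampK_def)
    qed
  }
  {
    assume "DS A d = DS B d"
    show "\<forall>m. \<bar>stS d (2*int \<mu>) A B m\<bar> \<le> 2*int \<mu>"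
    proof
      fix m
      have "real_of_int (XS d A B m) = - R m" using ident[of m] \<open>DS A d = DS B d\<close> by simp
      then have "\<bar>real_of_int (XS d A B m)\<bar> \<le> 2 * real \<mu>" using R_bound[of m] by simp
      then have "\<bar>XS d A B m\<bar> \<le> 2*int \<mu>" by linarith
      then show "\<bar>stS d (2*int \<mu>) A B m\<bar> \<le> 2*int \<mu>" by (simp add: st_clamp clampK_def)
    qed
  }
qed

lemma st_range: "-2*int \<mu>-1 \<le> stS d (2*int \<mu>) A B n \<and> stS d (2*int \<mu>) A B n \<le> 2*int \<mu>+1"
  by (simp add: st_clamp clampK_def)

lemma accepts_iff:
  "buchi_accepts (Mk d \<mu> P) (\<lambda>i. (A i, B i)) \<longleftrightarrow> (\<exists>\<^sub>\<infinity>i. P (stS d (2*int \<mu>) A B i))"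
proof
  let ?st = "stS d (2*int \<mu>) A B"
  assume "buchi_accepts (Mk d \<mu> P) (\<lambda>i. (A i, B i))"
  then obtain r where r0: "r 0 \<in> initial (Mk d \<mu> P)"
    and rt: "\<forall>i. (r i, (A i, B i), r (Suc i)) \<in> trans (Mk d \<mu> P)"
    and ra: "\<exists>\<^sub>\<infinity>i. r i \<in> accepting (Mk d \<mu> P)"
    unfolding buchi_accepts_def by blast
  have req: "r n = nat (?st n + 2*int \<mu> + 1)" for n
  proof (induction n)
    case 0 then show ?case using r0 by (simp add: Mk_def)
  next
    case (Suc n)
    have "(r n, (A n, B n), r (Suc n)) \<in> trans (Mk d \<mu> P)" using rt by blast
    then have "r (Suc n) = nat (stepK d (2*int \<mu>) (int (r n) - 2*int \<mu> - 1) (A n) (B n) + 2*int \<mu> + 1)"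
      by (auto simp: Mk_def)
    moreover have "int (r n) - 2*int \<mu> - 1 = ?st n" using Suc st_range[of n] by simp
    ultimately show ?case by simp
  qed
  have "r i \<in> accepting (Mk d \<mu> P) \<longleftrightarrow> P (?st i)" for i
    using req[of i] st_range[of i] by (auto simp: Mk_def)
  then show "\<exists>\<^sub>\<infinity>i. P (?st i)" using ra by simp
next
  let ?st = "stS d (2*int \<mu>) A B"
  assume a: "\<exists>\<^sub>\<infinity>i. P (?st i)"
  define r where "r n = nat (?st n + 2*int \<mu> + 1)" for n
  have bk: "int (r n) - 2*int \<mu> - 1 = ?st n" for n using st_range[of n] by (simp add: r_def)
  have "r 0 \<in> initial (Mk d \<mu> P)" by (simp add: Mk_def r_def)
  moreover have "(r i, (A i, B i), r (Suc i)) \<in> trans (Mk d \<mu> P)" for i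
  proof -
    have "r i \<le> 4*\<mu>+2" using st_range[of i] by (simp add: r_def nat_le_iff)
    moreover have "r (Suc i) = nat (stepK d (2*int \<mu>) (int (r i) - 2*int \<mu> - 1) (A i) (B i) + 2*int \<mu> + 1)"
      using bk[of i] by (simp add: r_def)
    ultimately show ?thesis using bA by (auto simp: Mk_def)
  qed
  moreover have "r i \<in> accepting (Mk d \<mu> P) \<longleftrightarrow> P (?st i)" for i
    using bk[of i] st_range[of i] by (auto simp: Mk_def r_def)
  ultimately show "buchi_accepts (Mk d \<mu> P) (\<lambda>i. (A i, B i))"
    unfolding buchi_accepts_def using a by auto
qed

lemma final:
  assumes "P (2*int \<mu>+1) = pp" "P (-2*int \<mu>-1) = pn" "\<forall>x. \<bar>x\<bar> \<le> 2*int \<mu> \<longrightarrow> P x = pz"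
  shows "buchi_accepts (Mk d \<mu> P) (\<lambda>i. (A i, B i)) \<longleftrightarrow>
     (if DS A d > DS B d then pp else if DS A d < DS B d then pn else pz)"
proof -
  let ?st = "stS d (2*int \<mu>) A B"
  have ev: "(\<exists>\<^sub>\<infinity>i. P (?st i)) \<longleftrightarrow> P v" if "\<forall>m\<ge>N. ?st m = v" for N v
  proof -
    have "(\<exists>\<^sub>\<infinity>i. P (?st i)) \<longleftrightarrow> (\<forall>M. \<exists>n>M. P (?st n))" by (simp add: INFM_nat)
    also have "\<dots> \<longleftrightarrow> P v"
    proof
      assume "\<forall>M. \<exists>n>M. P (?st n)"
      then obtain n where "n > N" "P (?st n)" by blast
      then show "P v" using that by auto
    next
      assume "P v"
      show "\<forall>M. \<exists>n>M. P (?st n)"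
      proof
        fix M
        have "?st (Suc (max M N)) = v" using that by (metis le_SucI max.cobounded2)
        then show "\<exists>n>M. P (?st n)"
          using \<open>P v\<close> by (metis lessI max.cobounded1 le_imp_less_Suc)
      qed
    qed
    finally show ?thesis .
  qed
  show ?thesis
  proof (cases "DS A d > DS B d")
    case True
    then obtain N where "\<forall>m\<ge>N. ?st m = 2*int \<mu> + 1" using tri by blast
    then show ?thesis using ev True assms accepts_iff by simp
  next
    case F: False
    show ?thesis
    proof (cases "DS A d < DS B d")
      case True
      then obtain N where "\<forall>m\<ge>N. ?st m = -2*int \<mu> - 1" using tri by blast
      then show ?thesis using ev True F assms accepts_iff by simp
    next
      case False
      then have "DS A d = DS B d" using F by simp
      then have "\<forall>m. P (?st m) = pz" using tri assms(3) by blast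
      then have "(\<exists>\<^sub>\<infinity>i. P (?st i)) \<longleftrightarrow> pz" by (simp add: INFM_nat) 
      then show ?thesis using F False accepts_iff by simp
    qed
  qed
qed

end

definition goodR :: "nat \<Rightarrow> nat \<Rightarrow> (real \<Rightarrow> real \<Rightarrow> bool) \<Rightarrow> bool" where
  "goodR d \<mu> Rel \<longleftrightarrow> (\<exists>M :: (nat, nat \<times> nat) buchi.
             wf_buchi M \<and> alphabet M = {0..\<mu>} \<times> {0..\<mu>} \<and>
             (\<forall>A B :: nat \<Rightarrow> nat. (\<forall>i. A i \<le> \<mu> \<and> B i \<le> \<mu>) \<longrightarrow>
                (buchi_accepts M (\<lambda>i. (A i, B i)) \<longleftrightarrow> Rel (DS A d) (DS B d))))"

lemma rel_case:
  assumes d: "d > 1"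
    and "P (2*int \<mu>+1) = pp" "P (-2*int \<mu>-1) = pn" "\<forall>x. \<bar>x\<bar> \<le> 2*int \<mu> \<longrightarrow> P x = pz"
    and RR: "\<forall>x y::real. Rel x y \<longleftrightarrow> (if x > y then pp else if x < y then pn else pz)"
  shows "goodR d \<mu> Rel"
  unfolding goodR_def
  apply (rule exI[of _ "Mk d \<mu> P"])
  using final[OF d _ assms(2-4)] wf_Mk RR by (auto simp: Mk_def)

theorem corollary12:
  fixes d \<mu> :: nat
  assumes "d > 1" and "\<mu> > 0"
  shows "\<forall>R \<in> {(\<le>), (<), (\<ge>), (>), (=), (\<noteq>)} :: (real \<Rightarrow> real \<Rightarrow> bool) set.
           \<exists>M :: (nat, nat \<times> nat) buchi.
             wf_buchi M \<and> alphabet M = {0..\<mu>} \<times> {0..\<mu>} \<and>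
             (\<forall>A B :: nat \<Rightarrow> nat. (\<forall>i. A i \<le> \<mu> \<and> B i \<le> \<mu>) \<longrightarrow>
                (buchi_accepts M (\<lambda>i. (A i, B i)) \<longleftrightarrow> R (DS A d) (DS B d)))"
proof -
  note rc = rel_case[OF assms(1)]
  have "goodR d \<mu> (\<le>)" by (rule rc[where P="\<lambda>x. x \<le> 2*int \<mu>" and pp=False and pn=True and pz=True]) auto
  moreover have "goodR d \<mu> (<)" by (rule rc[where P="\<lambda>x. x < -2*int \<mu>" and pp=False and pn=True and pz=False]) auto
  moreover have "goodR d \<mu> (\<ge>)" by (rule rc[where P="\<lambda>x. x \<ge> -2*int \<mu>" and pp=True and pn=False and pz=True]) auto
  moreover have "goodR d \<mu> (>)" by (rule rc[where P="\<lambda>x. x > 2*int \<mu>" and pp=True and pn=False and pz=False]) auto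
  moreover have "goodR d \<mu> (=)" by (rule rc[where P="\<lambda>x. \<bar>x\<bar> \<le> 2*int \<mu>" and pp=False and pn=False and pz=True]) auto
  moreover have "goodR d \<mu> (\<noteq>)" by (rule rc[where P="\<lambda>x. \<bar>x\<bar> > 2*int \<mu>" and pp=True and pn=True and pz=False]) auto
  ultimately have "\<forall>R \<in> {(\<le>), (<), (\<ge>), (>), (=), (\<noteq>)} :: (real \<Rightarrow> real \<Rightarrow> bool) set. goodR d \<mu> R"
    by blast
  then show ?thesis unfolding goodR_def .
qed

end
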